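(* Let $G$ be a group generated by $x_1,\dots,x_n$, with finite commutator subgroup $C=[G,G]$, such that $G/C$ is free abelian of rank $n$ with basis the images of $x_1,\dots,x_n$. Define $$X=\{g_{\mathbf m}\in T:\ c_{\,x_1^{m_1}x_2^{m_2}\cdots x_{k-1}^{m_{k-1}},\;x_k}=e\ \text{ for all } k=1,\dots,n\},\qquad P=X\cap \mathcal C_G(C),$$ where $\mathcal C_G(C)$ is the centralizer of $C$ in $G$. For $1\le i,j\le n$ let $V_{ij}$ be the least positive integer with $c_{x_i^{V_{ij}}x_j}=e$ and $v_i$ the least positive integer with $x_i^{v_i}\in\mathcal C_G(C)$ (these exist). Then: 1. For every generating set $\Lambda$ of $G$, the set of $\mathbf m\in\mathbb Z^n$ such that $l_{\mathbf r+\mathbf m,\lambda}=l_{\mathbf r,\lambda}$ for all $\mathbf r\in\mathbb Z^n$ and all $\lambda\in\Lambda$ is exactly $\{\mathbf m: g_{\mathbf m}\in P\}$; in particular it does not depend on $\Lambda$. 2. $P$ is a subgroup of $G$ isomorphic to $\mathbb Z^n$. 3. $P$ contains the non-trivial subgroup $P_{\mathrm{straight}}=\langle x_i^{m_i}: i=1,\dots,n\rangle$, where $m_i=\operatorname{lcm}\big(\{V_{ij}: n\ge j>i\}\cup\{v_i\}\big)$.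
   Context: Notation: $\bar g=g^{-1}$; the commutator is $c_{gh}=\bar g\,\bar h\,g\,h$; $c^{(g)}=\bar g\,c\,g$. For $\mathbf r\in\mathbb Z^n$ put $g_{\mathbf r}=x_1^{r_1}x_2^{r_2}\cdots x_n^{r_n}$ and $T=\{g_{\mathbf r}:\mathbf r\in\mathbb Z^n\}$ (Schreier transversal). Every $g\in G$ decomposes uniquely as $g=g_{\mathbf r}c$ with $c\in C$; write $\mathbf r_g=\mathbf r$ (the image of $g$ in $G/C\cong\mathbb Z^n$). For $\mathbf r\in\mathbb Z^n$ and $\lambda\in G$ the link is $l_{\mathbf r,\lambda}=\overline{g_{\mathbf r+\mathbf r_\lambda}}\,\lambda\,g_{\mathbf r}\in C$. *)

theory Defs
  imports "HOL-Algebra.Algebra"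
begin

definition comm :: "('a, 'b) monoid_scheme \<Rightarrow> 'a \<Rightarrow> 'a \<Rightarrow> 'a" where
  "comm G g h = inv\<^bsub>G\<^esub> g \<otimes>\<^bsub>G\<^esub> inv\<^bsub>G\<^esub> h \<otimes>\<^bsub>G\<^esub> g \<otimes>\<^bsub>G\<^esub> h"

text \<open>Z^n, realised as integer vectors indexed by 0..n-1 (zero outside).\<close>
definition Zn :: "nat \<Rightarrow> (nat \<Rightarrow> int) set" where
  "Zn n = {r. \<forall>i\<ge>n. r i = 0}"

definition Zn_group :: "nat \<Rightarrow> (nat \<Rightarrow> int) monoid" where
  "Zn_group n = \<lparr>carrier = Zn n, monoid.mult = (\<lambda>r s i. r i + s i), one = (\<lambda>i. 0)\<rparr>"

text \<open>Ordered product x_0^{r_0} x_1^{r_1} ... x_{k-1}^{r_{k-1}}; g_r = gprod G x r n.\<close>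
fun gprod :: "('a, 'b) monoid_scheme \<Rightarrow> (nat \<Rightarrow> 'a) \<Rightarrow> (nat \<Rightarrow> int) \<Rightarrow> nat \<Rightarrow> 'a" where
  "gprod G x r 0 = \<one>\<^bsub>G\<^esub>"
| "gprod G x r (Suc k) = gprod G x r k \<otimes>\<^bsub>G\<^esub> (x k [^]\<^bsub>G\<^esub> r k)"

definition transversal :: "('a, 'b) monoid_scheme \<Rightarrow> (nat \<Rightarrow> 'a) \<Rightarrow> nat \<Rightarrow> 'a set" where
  "transversal G x n = (\<lambda>r. gprod G x r n) ` Zn n"

definition rvec :: "('a, 'b) monoid_scheme \<Rightarrow> (nat \<Rightarrow> 'a) \<Rightarrow> nat \<Rightarrow> 'a set \<Rightarrow> 'a \<Rightarrow> (nat \<Rightarrow> int)" where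
  "rvec G x n C g = (THE r. r \<in> Zn n \<and> inv\<^bsub>G\<^esub> (gprod G x r n) \<otimes>\<^bsub>G\<^esub> g \<in> C)"

definition link :: "('a, 'b) monoid_scheme \<Rightarrow> (nat \<Rightarrow> 'a) \<Rightarrow> nat \<Rightarrow> 'a set \<Rightarrow> (nat \<Rightarrow> int) \<Rightarrow> 'a \<Rightarrow> 'a" where
  "link G x n C r l = inv\<^bsub>G\<^esub> (gprod G x (\<lambda>i. r i + rvec G x n C l i) n)
      \<otimes>\<^bsub>G\<^esub> l \<otimes>\<^bsub>G\<^esub> gprod G x r n"

definition centralizer_of :: "('a, 'b) monoid_scheme \<Rightarrow> 'a set \<Rightarrow> 'a set" where
  "centralizer_of G H = {g \<in> carrier G. \<forall>h\<in>H. g \<otimes>\<^bsub>G\<^esub> h = h \<otimes>\<^bsub>G\<^esub> g}"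

text \<open>The set X (0-indexed: for each k<n, the commutator of x_0^{m_0}...x_{k-1}^{m_{k-1}} with x_k is trivial).\<close>
definition Xset :: "('a, 'b) monoid_scheme \<Rightarrow> (nat \<Rightarrow> 'a) \<Rightarrow> nat \<Rightarrow> 'a set" where
  "Xset G x n = {gprod G x m n | m. m \<in> Zn n \<and>
      (\<forall>k<n. comm G (gprod G x m k) (x k) = \<one>\<^bsub>G\<^esub>)}"

definition Pset :: "('a, 'b) monoid_scheme \<Rightarrow> (nat \<Rightarrow> 'a) \<Rightarrow> nat \<Rightarrow> 'a set \<Rightarrow> 'a set" where
  "Pset G x n C = Xset G x n \<inter> centralizer_of G C"

definition Vexp :: "('a, 'b) monoid_scheme \<Rightarrow> (nat \<Rightarrow> 'a) \<Rightarrow> nat \<Rightarrow> nat \<Rightarrow> nat" where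
  "Vexp G x i j = (LEAST V::nat. 0 < V \<and> comm G (x i [^]\<^bsub>G\<^esub> V) (x j) = \<one>\<^bsub>G\<^esub>)"

definition vexp :: "('a, 'b) monoid_scheme \<Rightarrow> (nat \<Rightarrow> 'a) \<Rightarrow> 'a set \<Rightarrow> nat \<Rightarrow> nat" where
  "vexp G x C i = (LEAST v::nat. 0 < v \<and> x i [^]\<^bsub>G\<^esub> v \<in> centralizer_of G C)"

definition mexp :: "('a, 'b) monoid_scheme \<Rightarrow> (nat \<Rightarrow> 'a) \<Rightarrow> nat \<Rightarrow> 'a set \<Rightarrow> nat \<Rightarrow> nat" where
  "mexp G x n C i = Lcm ({Vexp G x i j | j. i < j \<and> j < n} \<union> {vexp G x C i})"

definition P_straight :: "('a, 'b) monoid_scheme \<Rightarrow> (nat \<Rightarrow> 'a) \<Rightarrow> nat \<Rightarrow> 'a set \<Rightarrow> 'a set" where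
  "P_straight G x n C = generate G {x i [^]\<^bsub>G\<^esub> mexp G x n C i | i. i < n}"

end

theory Submission
  imports Defs
begin

lemma (in group) comm_one_iff:
  assumes "a \<in> carrier G" "b \<in> carrier G"
  shows "comm G a b = \<one> \<longleftrightarrow> a \<otimes> b = b \<otimes> a"
proof -
  have e: "comm G a b = inv (b \<otimes> a) \<otimes> (a \<otimes> b)"
    using assms by (simp add: comm_def inv_mult_group m_assoc)
  show ?thesis
  proof
    assume h: "comm G a b = \<one>"
    have "a \<otimes> b = (b \<otimes> a) \<otimes> (inv (b \<otimes> a) \<otimes> (a \<otimes> b))"
      using assms by (simp add: m_assoc[symmetric])
    also have "\<dots> = b \<otimes> a" using h e assms by simp
    finally show "a \<otimes> b = b \<otimes> a" .
  next
    assume "a \<otimes> b = b \<otimes> a"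
    then show "comm G a b = \<one>" using e assms by simp
  qed
qed

lemma (in group) commute_int_pow:
  assumes "a \<otimes> b = b \<otimes> a" "a \<in> carrier G" "b \<in> carrier G"
  shows "a [^] (i::int) \<otimes> b = b \<otimes> a [^] i"
proof (cases i rule: int_cases)
  case (nonneg k)
  then show ?thesis using assms by (simp add: int_pow_int group_commutes_pow)
next
  case (neg k)
  have c: "a [^] Suc k \<otimes> b = b \<otimes> a [^] Suc k" using assms group_commutes_pow by blast
  have "a [^] i = inv (a [^] Suc k)" using neg assms
    by (metis int_pow_neg_int)
  then show ?thesis using c assms
    by (metis inv_closed inv_solve_left inv_solve_right m_assoc m_closed nat_pow_closed)
qed

locale thm3_ctx = group G for G (structure) +
  fixes x :: "nat \<Rightarrow> 'a" and n :: nat and C :: "'a set"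
  assumes x_carr: "\<And>i. i < n \<Longrightarrow> x i \<in> carrier G"
    and C_nrm: "C \<lhd> G"
    and C_fin: "finite C"
    and basis: "(\<lambda>r. C #> gprod G x r n) \<in> iso (Zn_group n) (G Mod C)"
begin

lemma gprod_carr: "k \<le> n \<Longrightarrow> gprod G x r k \<in> carrier G"
  by (induction k) (auto simp: x_carr)

lemma g_carr[simp]: "gprod G x r n \<in> carrier G"
  by (simp add: gprod_carr)

lemma gprod_zero[simp]: "gprod G x (\<lambda>i. 0) k = \<one>"
  by (induction k) auto

lemma gprod_cong: "(\<And>i. i < k \<Longrightarrow> r i = s i) \<Longrightarrow> gprod G x r k = gprod G x s k"
  by (induction k) auto

lemma gprod_unit: "k \<le> n \<Longrightarrow> gprod G x (\<lambda>j. if j = i then a else 0) k = (if k \<le> i then \<one> else x i [^] a)"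
proof (induction k)
  case 0
  then show ?case by simp
next
  case (Suc k)
  then show ?case using x_carr[of i] x_carr[of k]
    by (cases "i = k") (auto simp: not_le)
qed

lemma C_sub: "C \<subseteq> carrier G"
  using C_nrm normal_imp_subgroup subgroup.subset by blast

lemma C_subgroup: "subgroup C G"
  using C_nrm normal_imp_subgroup by blast

lemma Zn_add: "r \<in> Zn n \<Longrightarrow> s \<in> Zn n \<Longrightarrow> (\<lambda>i. r i + s i) \<in> Zn n"
  by (simp add: Zn_def)
lemma Zn_diff: "r \<in> Zn n \<Longrightarrow> s \<in> Zn n \<Longrightarrow> (\<lambda>i. r i - s i) \<in> Zn n"
  by (simp add: Zn_def)
lemma Zn_neg: "r \<in> Zn n \<Longrightarrow> (\<lambda>i. - r i) \<in> Zn n"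
  by (simp add: Zn_def)
lemma Zn_zero: "(\<lambda>i. 0) \<in> Zn n"
  by (simp add: Zn_def)
lemma Zn_unit: "i < n \<Longrightarrow> (\<lambda>j. if j = i then a else 0) \<in> Zn n"
  by (simp add: Zn_def)

lemma hom_g:
  assumes "r \<in> Zn n" "s \<in> Zn n"
  shows "C #> gprod G x (\<lambda>i. r i + s i) n = C #> (gprod G x r n \<otimes> gprod G x s n)"
proof -
  have h: "(\<lambda>r. C #> gprod G x r n) \<in> hom (Zn_group n) (G Mod C)"
    using basis by (simp add: iso_def)
  have "C #> gprod G x (r \<otimes>\<^bsub>Zn_group n\<^esub> s) n
        = (C #> gprod G x r n) \<otimes>\<^bsub>G Mod C\<^esub> (C #> gprod G x s n)"
    using hom_mult[OF h, of r s] assms by (simp add: Zn_group_def)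
  then show ?thesis
    using normal.rcos_sum[OF C_nrm] by (simp add: Zn_group_def FactGroup_def)
qed

lemma inj_g:
  assumes "r \<in> Zn n" "s \<in> Zn n" "C #> gprod G x r n = C #> gprod G x s n"
  shows "r = s"
proof -
  have "inj_on (\<lambda>r. C #> gprod G x r n) (Zn n)"
    using basis by (simp add: iso_def bij_betw_def Zn_group_def)
  then show ?thesis using assms by (meson inj_onD)
qed

lemma surj_g:
  assumes "a \<in> carrier G"
  shows "\<exists>r\<in>Zn n. C #> a = C #> gprod G x r n"
proof -
  have "(\<lambda>r. C #> gprod G x r n) ` Zn n = rcosets C"
    using basis by (simp add: iso_def bij_betw_def Zn_group_def FactGroup_def)
  moreover have "C #> a \<in> rcosets C" using rcosetsI[OF C_sub assms] .
  ultimately have "C #> a \<in> (\<lambda>r. C #> gprod G x r n) ` Zn n" by simp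
  then show ?thesis by auto
qed

lemma coset_eq_iff:
  assumes "a \<in> carrier G" "b \<in> carrier G"
  shows "(C #> a = C #> b) \<longleftrightarrow> a \<otimes> inv b \<in> C"
proof
  assume "C #> a = C #> b"
  then have "a \<in> C #> b" using rcos_self[OF assms(1) C_subgroup] by simp
  then show "a \<otimes> inv b \<in> C" using subgroup.rcos_module_imp[OF C_subgroup] assms is_group by blast
next
  assume "a \<otimes> inv b \<in> C"
  then have "a \<in> C #> b" using subgroup.rcos_module_rev[OF C_subgroup] assms is_group by blast
  then show "C #> a = C #> b" using repr_independence[OF _ assms(2) C_subgroup] by simp
qed

lemma coset_eq_iff':
  assumes "a \<in> carrier G" "b \<in> carrier G"
  shows "(C #> a = C #> b) \<longleftrightarrow> inv b \<otimes> a \<in> C"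
proof -
  have "a \<otimes> inv b \<in> C \<longleftrightarrow> inv b \<otimes> a \<in> C"
  proof
    assume h: "a \<otimes> inv b \<in> C"
    have "inv b \<otimes> (a \<otimes> inv b) \<otimes> b \<in> C"
      using normal.inv_op_closed1[OF C_nrm assms(2) h] .
    then show "inv b \<otimes> a \<in> C" using assms by (simp add: m_assoc)
  next
    assume h: "inv b \<otimes> a \<in> C"
    have "b \<otimes> (inv b \<otimes> a) \<otimes> inv b \<in> C"
      using normal.inv_op_closed2[OF C_nrm assms(2) h] .
    then show "a \<otimes> inv b \<in> C" using assms by (simp add: m_assoc[symmetric])
  qed
  then show ?thesis using coset_eq_iff[OF assms] by simp
qed

lemma cos_mult:
  assumes "a \<in> carrier G" "a' \<in> carrier G" "b \<in> carrier G" "b' \<in> carrier G"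
    "C #> a = C #> a'" "C #> b = C #> b'"
  shows "C #> (a \<otimes> b) = C #> (a' \<otimes> b')"
  using assms normal.rcos_sum[OF C_nrm] by metis

lemma cos_inv:
  assumes "a \<in> carrier G" "a' \<in> carrier G" "C #> a = C #> a'"
  shows "C #> inv a = C #> inv a'"
proof -
  have "inv a \<otimes> a' \<in> C" using assms coset_eq_iff' by metis
  then show ?thesis using coset_eq_iff assms by simp
qed

end


context thm3_ctx
begin

lemma cancel_aux[simp]: "b \<in> carrier G \<Longrightarrow> c \<in> carrier G \<Longrightarrow> b \<otimes> (inv b \<otimes> c) = c"
  by (simp add: m_assoc[symmetric])
lemma cancel_aux2[simp]: "b \<in> carrier G \<Longrightarrow> c \<in> carrier G \<Longrightarrow> inv b \<otimes> (b \<otimes> c) = c"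
  by (simp add: m_assoc[symmetric])

lemma rvec_eq:
  assumes "a \<in> carrier G" "r \<in> Zn n" "C #> a = C #> gprod G x r n"
  shows "rvec G x n C a = r"
proof -
  have "(THE r. r \<in> Zn n \<and> inv (gprod G x r n) \<otimes> a \<in> C) = r"
  proof (rule the_equality)
    show "r \<in> Zn n \<and> inv (gprod G x r n) \<otimes> a \<in> C"
      using assms coset_eq_iff' by simp
  next
    fix r' assume h: "r' \<in> Zn n \<and> inv (gprod G x r' n) \<otimes> a \<in> C"
    then have "C #> a = C #> gprod G x r' n" using assms coset_eq_iff' by simp
    then show "r' = r" using inj_g h assms by metis
  qed
  then show ?thesis by (simp add: rvec_def)
qed

lemma rvec_spec:
  assumes "a \<in> carrier G"
  shows "rvec G x n C a \<in> Zn n \<and> C #> a = C #> gprod G x (rvec G x n C a) n"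
proof -
  obtain r where "r \<in> Zn n" "C #> a = C #> gprod G x r n" using surj_g assms by blast
  then show ?thesis using rvec_eq assms by simp
qed

lemma rvec_Zn: "a \<in> carrier G \<Longrightarrow> rvec G x n C a \<in> Zn n"
  using rvec_spec by blast

lemma rvec_mult:
  assumes "a \<in> carrier G" "b \<in> carrier G"
  shows "rvec G x n C (a \<otimes> b) = (\<lambda>i. rvec G x n C a i + rvec G x n C b i)"
proof -
  let ?ra = "rvec G x n C a" and ?rb = "rvec G x n C b"
  have ra: "?ra \<in> Zn n" "C #> a = C #> gprod G x ?ra n" using rvec_spec[OF assms(1)] by blast+
  have rb: "?rb \<in> Zn n" "C #> b = C #> gprod G x ?rb n" using rvec_spec[OF assms(2)] by blast+
  have "C #> (a \<otimes> b) = C #> (gprod G x ?ra n \<otimes> gprod G x ?rb n)"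
    using cos_mult[OF assms(1) _ assms(2) _ ra(2) rb(2)] by simp
  also have "\<dots> = C #> gprod G x (\<lambda>i. ?ra i + ?rb i) n"
    using hom_g[OF ra(1) rb(1)] by simp
  finally show ?thesis using rvec_eq[of "a \<otimes> b"] assms Zn_add[OF ra(1) rb(1)] by simp
qed

lemma rvec_one: "rvec G x n C \<one> = (\<lambda>i. 0)"
  using rvec_eq[of \<one> "\<lambda>i. 0"] Zn_zero by simp

lemma rvec_C: "c \<in> C \<Longrightarrow> rvec G x n C c = (\<lambda>i. 0)"
  using rvec_eq[of c "\<lambda>i. 0"] Zn_zero C_sub coset_eq_iff[of c \<one>] by auto

lemma rvec_g: "s \<in> Zn n \<Longrightarrow> rvec G x n C (gprod G x s n) = s"
  using rvec_eq by simp

lemma link_carr: "l \<in> carrier G \<Longrightarrow> link G x n C r l \<in> carrier G"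
  by (simp add: link_def)

lemma link_in_C:
  assumes "r \<in> Zn n" "l \<in> carrier G"
  shows "link G x n C r l \<in> C"
proof -
  let ?rl = "rvec G x n C l"
  have rl: "?rl \<in> Zn n" "C #> l = C #> gprod G x ?rl n" using rvec_spec[OF assms(2)] by blast+
  have fe: "(\<lambda>i. r i + ?rl i) = (\<lambda>i. ?rl i + r i)" by (simp add: add.commute)
  have u: "C #> gprod G x (\<lambda>i. r i + ?rl i) n = C #> (gprod G x ?rl n \<otimes> gprod G x r n)"
    using hom_g[of ?rl r] rl assms fe by simp
  have "C #> link G x n C r l = C #> (inv (gprod G x ?rl n \<otimes> gprod G x r n) \<otimes> gprod G x ?rl n \<otimes> gprod G x r n)"
    unfolding link_def
    by (rule cos_mult, simp_all add: assms, rule cos_mult, simp_all add: assms rl, rule cos_inv, simp_all add: u)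
  also have "\<dots> = C #> \<one>" by (simp add: m_assoc)
  finally show ?thesis using coset_eq_iff[of "link G x n C r l" \<one>] assms link_carr by simp
qed

lemma cocycle:
  assumes "l \<in> carrier G" "u \<in> carrier G"
  shows "link G x n C r (l \<otimes> u) = link G x n C (\<lambda>i. r i + rvec G x n C u i) l \<otimes> link G x n C r u"
proof -
  let ?rl = "rvec G x n C l" and ?ru = "rvec G x n C u"
  have fe: "(\<lambda>i. r i + ?ru i + ?rl i) = (\<lambda>i. r i + (?rl i + ?ru i))" by (simp add: algebra_simps)
  show ?thesis unfolding link_def using assms
    by (simp add: rvec_mult fe m_assoc)
qed

lemma link_one: "link G x n C r \<one> = \<one>"
  by (simp add: link_def rvec_one)

lemma link_inv:
  assumes "a \<in> carrier G"
  shows "link G x n C s (inv a) = inv (link G x n C (\<lambda>i. s i - rvec G x n C a i) a)"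
proof -
  let ?r' = "\<lambda>i. s i - rvec G x n C a i"
  have "\<one> = link G x n C ?r' (inv a \<otimes> a)" using assms by (simp add: link_one)
  also have "\<dots> = link G x n C s (inv a) \<otimes> link G x n C ?r' a"
    using cocycle[of "inv a" a ?r'] assms by simp
  finally show ?thesis using assms link_carr
    by (metis inv_closed inv_equality)
qed

lemma invar_all:
  assumes m: "m \<in> Zn n" and L: "\<Lambda> \<subseteq> carrier G" and gen: "generate G \<Lambda> = carrier G"
    and invA: "\<forall>r\<in>Zn n. \<forall>l\<in>\<Lambda>. link G x n C (\<lambda>i. r i + m i) l = link G x n C r l"
    and a: "a \<in> carrier G"
  shows "\<forall>r\<in>Zn n. link G x n C (\<lambda>i. r i + m i) a = link G x n C r a"
proof -
  have "a \<in> generate G \<Lambda> \<Longrightarrow> a \<in> carrier G \<and> (\<forall>r\<in>Zn n. link G x n C (\<lambda>i. r i + m i) a = link G x n C r a)"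
  proof (induction rule: generate.induct)
    case one
    then show ?case by (simp add: link_one)
  next
    case (incl h)
    then show ?case using invA L by auto
  next
    case (inv h)
    have hc: "h \<in> carrier G" using inv.hyps L by auto
    show ?case
    proof (intro conjI ballI)
      show "inv h \<in> carrier G" using hc by simp
      fix r assume r: "r \<in> Zn n"
      let ?rh = "rvec G x n C h"
      have r2: "(\<lambda>i. r i - ?rh i) \<in> Zn n" using Zn_diff r rvec_Zn hc by blast
      have fe: "(\<lambda>i. r i + m i - ?rh i) = (\<lambda>i. (r i - ?rh i) + m i)" by (simp add: algebra_simps)
      have "link G x n C (\<lambda>i. r i + m i) (inv h) = inv (link G x n C (\<lambda>i. (r i - ?rh i) + m i) h)"
        using link_inv[OF hc] fe by simp
      also have "\<dots> = inv (link G x n C (\<lambda>i. r i - ?rh i) h)"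
        using invA r2 \<open>h \<in> \<Lambda>\<close> by simp
      also have "\<dots> = link G x n C r (inv h)" using link_inv[OF hc] by simp
      finally show "link G x n C (\<lambda>i. r i + m i) (inv h) = link G x n C r (inv h)" .
    qed
  next
    case (eng h1 h2)
    show ?case
    proof (intro conjI ballI)
      show "h1 \<otimes> h2 \<in> carrier G" using eng.IH by simp
      fix r assume r: "r \<in> Zn n"
      let ?r2 = "rvec G x n C h2"
      have r2: "(\<lambda>i. r i + ?r2 i) \<in> Zn n" using Zn_add r rvec_Zn eng.IH by blast
      have fe: "(\<lambda>i. r i + m i + ?r2 i) = (\<lambda>i. (r i + ?r2 i) + m i)" by (simp add: algebra_simps)
      have "link G x n C (\<lambda>i. r i + m i) (h1 \<otimes> h2)
          = link G x n C (\<lambda>i. (r i + ?r2 i) + m i) h1 \<otimes> link G x n C (\<lambda>i. r i + m i) h2"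
        using cocycle eng.IH fe by simp
      also have "\<dots> = link G x n C (\<lambda>i. r i + ?r2 i) h1 \<otimes> link G x n C r h2"
        using eng.IH r r2 by simp
      also have "\<dots> = link G x n C r (h1 \<otimes> h2)" using cocycle eng.IH by simp
      finally show "link G x n C (\<lambda>i. r i + m i) (h1 \<otimes> h2) = link G x n C r (h1 \<otimes> h2)" .
    qed
  qed
  then show ?thesis using a gen by simp
qed

end


context thm3_ctx
begin

definition Xc :: "(nat \<Rightarrow> int) \<Rightarrow> bool" where
  "Xc m \<longleftrightarrow> (\<forall>k<n. comm G (gprod G x m k) (x k) = \<one>)"

definition good :: "(nat \<Rightarrow> int) \<Rightarrow> bool" where
  "good m \<longleftrightarrow> m \<in> Zn n \<and> gprod G x m n \<in> centralizer_of G C \<and>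
     (\<forall>s\<in>Zn n. gprod G x (\<lambda>i. s i + m i) n = gprod G x s n \<otimes> gprod G x m n)"

lemma lemA:
  assumes "Xc m" "k \<le> n"
  shows "gprod G x (\<lambda>i. s i + m i) k = gprod G x s k \<otimes> gprod G x m k"
  using assms(2)
proof (induction k)
  case 0
  then show ?case by simp
next
  case (Suc k)
  have k: "k < n" using Suc.prems by simp
  have xk: "x k \<in> carrier G" using x_carr k by simp
  have ps: "gprod G x s k \<in> carrier G" "gprod G x m k \<in> carrier G" using gprod_carr k by auto
  have c0: "gprod G x m k \<otimes> x k = x k \<otimes> gprod G x m k"
    using assms(1) k comm_one_iff[OF ps(2) xk] by (simp add: Xc_def)
  have c: "x k [^] s k \<otimes> gprod G x m k = gprod G x m k \<otimes> x k [^] s k"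
    using commute_int_pow[OF c0[symmetric] xk ps(2)] .
  have "gprod G x (\<lambda>i. s i + m i) (Suc k) = gprod G x s k \<otimes> gprod G x m k \<otimes> (x k [^] s k \<otimes> x k [^] m k)"
    using Suc k by (simp add: int_pow_mult xk)
  also have "\<dots> = gprod G x s k \<otimes> (gprod G x m k \<otimes> x k [^] s k) \<otimes> x k [^] m k"
    using ps xk by (simp add: m_assoc)
  also have "\<dots> = gprod G x s k \<otimes> (x k [^] s k \<otimes> gprod G x m k) \<otimes> x k [^] m k"
    using c by simp
  also have "\<dots> = gprod G x s (Suc k) \<otimes> gprod G x m (Suc k)"
    using ps xk by (simp add: m_assoc)
  finally show ?case .
qed

lemma bump:
  assumes k: "k < n" and N: "Suc k \<le> N" "N \<le> n"
  shows "gprod G x (\<lambda>i. (if i = k then 1 else 0) + m i) N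
       = gprod G x m k \<otimes> x k \<otimes> inv (gprod G x m k) \<otimes> gprod G x m N"
  using N
proof (induction N)
  case 0
  then show ?case by simp
next
  case (Suc N)
  have xk: "x k \<in> carrier G" using x_carr k by simp
  have p: "gprod G x m k \<in> carrier G" using gprod_carr k by simp
  show ?case
  proof (cases "N = k")
    case True
    have pe: "gprod G x (\<lambda>i. (if i = k then 1 else 0) + m i) k = gprod G x m k"
      by (rule gprod_cong) simp
    show ?thesis using True pe p xk
      by (simp add: int_pow_mult m_assoc)
  next
    case False
    then have N1: "Suc k \<le> N" "N \<le> n" using Suc.prems by auto
    have xN: "x N \<in> carrier G" using x_carr Suc.prems by simp
    have "gprod G x (\<lambda>i. (if i = k then 1 else 0) + m i) (Suc N)
       = gprod G x m k \<otimes> x k \<otimes> inv (gprod G x m k) \<otimes> gprod G x m N \<otimes> x N [^] m N"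
      using Suc.IH[OF N1] False by simp
    then show ?thesis using p xk xN gprod_carr N1 by (simp add: m_assoc)
  qed
qed

lemma lemB:
  assumes m: "m \<in> Zn n"
    and sh: "\<forall>s\<in>Zn n. gprod G x (\<lambda>i. s i + m i) n = gprod G x s n \<otimes> gprod G x m n"
  shows "Xc m"
  unfolding Xc_def
proof (intro allI impI)
  fix k assume k: "k < n"
  let ?p = "gprod G x m k"
  have xk: "x k \<in> carrier G" using x_carr k by simp
  have p: "?p \<in> carrier G" using gprod_carr k by simp
  have "?p \<otimes> x k \<otimes> inv ?p \<otimes> gprod G x m n = gprod G x (\<lambda>i. (if i = k then 1 else 0) + m i) n"
    using bump[OF k _ order_refl] k by simp
  also have "\<dots> = gprod G x (\<lambda>i. if i = k then 1 else 0) n \<otimes> gprod G x m n"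
    using sh Zn_unit[OF k] by simp
  also have "\<dots> = x k \<otimes> gprod G x m n" using gprod_unit[of n k 1] k xk by simp
  finally have "?p \<otimes> x k \<otimes> inv ?p = x k" using p xk by simp
  then have "?p \<otimes> x k = x k \<otimes> ?p" using p xk
    by (metis inv_closed inv_solve_right m_closed)
  then show "comm G ?p (x k) = \<one>" using comm_one_iff p xk by simp
qed

lemma good_iff: "good m \<longleftrightarrow> m \<in> Zn n \<and> Xc m \<and> gprod G x m n \<in> centralizer_of G C"
  using lemA lemB unfolding good_def by auto

lemma Pset_iff:
  assumes "m \<in> Zn n"
  shows "gprod G x m n \<in> Pset G x n C \<longleftrightarrow> good m"
proof
  assume h: "gprod G x m n \<in> Pset G x n C"
  then obtain m' where m': "gprod G x m n = gprod G x m' n" "m' \<in> Zn n" "Xc m'"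
    unfolding Pset_def Xset_def Xc_def by auto
  then have "m = m'" using inj_g assms by metis
  then show "good m" using h m' good_iff unfolding Pset_def by auto
next
  assume "good m"
  then show "gprod G x m n \<in> Pset G x n C"
    unfolding good_iff Pset_def Xset_def Xc_def by auto
qed

lemma Pset_eq: "Pset G x n C = (\<lambda>m. gprod G x m n) ` {m. good m}"
proof -
  have "Pset G x n C \<subseteq> (\<lambda>m. gprod G x m n) ` Zn n"
    unfolding Pset_def Xset_def by auto
  show ?thesis
  proof (intro equalityI subsetI)
    fix a assume a: "a \<in> Pset G x n C"
    then obtain m where m: "m \<in> Zn n" "a = gprod G x m n"
      using \<open>Pset G x n C \<subseteq> _\<close> by blast
    then have "good m" using Pset_iff a by simp
    then show "a \<in> (\<lambda>m. gprod G x m n) ` {m. good m}" using m by blast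
  next
    fix a assume "a \<in> (\<lambda>m. gprod G x m n) ` {m. good m}"
    then obtain m where m: "good m" "a = gprod G x m n" by blast
    then show "a \<in> Pset G x n C" using Pset_iff good_def by simp
  qed
qed

lemma claim1:
  assumes L: "\<Lambda> \<subseteq> carrier G" and gen: "generate G \<Lambda> = carrier G"
  shows "{m \<in> Zn n. \<forall>r \<in> Zn n. \<forall>l \<in> \<Lambda>. link G x n C (\<lambda>i. r i + m i) l = link G x n C r l}
        = {m \<in> Zn n. gprod G x m n \<in> Pset G x n C}"
proof (intro equalityI subsetI)
  fix m assume "m \<in> {m \<in> Zn n. \<forall>r \<in> Zn n. \<forall>l \<in> \<Lambda>. link G x n C (\<lambda>i. r i + m i) l = link G x n C r l}"
  then have m: "m \<in> Zn n" and iv: "\<forall>r \<in> Zn n. \<forall>l \<in> \<Lambda>. link G x n C (\<lambda>i. r i + m i) l = link G x n C r l"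
    by auto
  have all: "\<And>a. a \<in> carrier G \<Longrightarrow> link G x n C m a = link G x n C (\<lambda>i. 0) a"
    using invar_all[OF m L gen iv] Zn_zero by fastforce
  have gm: "gprod G x m n \<in> carrier G" by simp
  have cent: "gprod G x m n \<in> centralizer_of G C"
    unfolding centralizer_of_def
  proof (intro CollectI conjI ballI gm)
    fix c assume c: "c \<in> C"
    then have cc: "c \<in> carrier G" using C_sub by auto
    have "inv (gprod G x m n) \<otimes> c \<otimes> gprod G x m n = c"
      using all[OF cc] rvec_C[OF c] cc by (simp add: link_def)
    then have "gprod G x m n \<otimes> (inv (gprod G x m n) \<otimes> c \<otimes> gprod G x m n) = gprod G x m n \<otimes> c" by simp
    then show "gprod G x m n \<otimes> c = c \<otimes> gprod G x m n" using cc by (simp add: m_assoc)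
  qed
  have sh: "\<forall>s\<in>Zn n. gprod G x (\<lambda>i. s i + m i) n = gprod G x s n \<otimes> gprod G x m n"
  proof
    fix s assume s: "s \<in> Zn n"
    have fe: "(\<lambda>i. m i + s i) = (\<lambda>i. s i + m i)" by (simp add: add.commute)
    have "inv (gprod G x (\<lambda>i. s i + m i) n) \<otimes> gprod G x s n \<otimes> gprod G x m n = \<one>"
      using all[of "gprod G x s n"] rvec_g[OF s] fe by (simp add: link_def)
    then have "inv (gprod G x (\<lambda>i. s i + m i) n) \<otimes> (gprod G x s n \<otimes> gprod G x m n) = \<one>"
      by (simp add: m_assoc)
    then have "gprod G x (\<lambda>i. s i + m i) n \<otimes> (inv (gprod G x (\<lambda>i. s i + m i) n) \<otimes> (gprod G x s n \<otimes> gprod G x m n)) = gprod G x (\<lambda>i. s i + m i) n"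
      by simp
    then show "gprod G x (\<lambda>i. s i + m i) n = gprod G x s n \<otimes> gprod G x m n"
      by simp
  qed
  have "good m" using m cent sh good_def by simp
  then show "m \<in> {m \<in> Zn n. gprod G x m n \<in> Pset G x n C}" using Pset_iff m by simp
next
  fix m assume "m \<in> {m \<in> Zn n. gprod G x m n \<in> Pset G x n C}"
  then have m: "m \<in> Zn n" and gd: "good m" using Pset_iff by auto
  have cent: "gprod G x m n \<in> centralizer_of G C" and
    sh: "\<forall>s\<in>Zn n. gprod G x (\<lambda>i. s i + m i) n = gprod G x s n \<otimes> gprod G x m n"
    using gd good_def by auto
  have "\<forall>r \<in> Zn n. \<forall>l \<in> \<Lambda>. link G x n C (\<lambda>i. r i + m i) l = link G x n C r l"
  proof (intro ballI)
    fix r l assume r: "r \<in> Zn n" and l: "l \<in> \<Lambda>"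
    have lc: "l \<in> carrier G" using l L by auto
    let ?rl = "rvec G x n C l"
    have rl: "?rl \<in> Zn n" using rvec_Zn lc by simp
    have fe: "(\<lambda>i. r i + m i + ?rl i) = (\<lambda>i. (r i + ?rl i) + m i)" by (simp add: algebra_simps)
    have e1: "gprod G x (\<lambda>i. r i + m i + ?rl i) n = gprod G x (\<lambda>i. r i + ?rl i) n \<otimes> gprod G x m n"
      using fe sh Zn_add[OF r rl] by simp
    have e2: "gprod G x (\<lambda>i. r i + m i) n = gprod G x r n \<otimes> gprod G x m n" using sh r by simp
    let ?L = "link G x n C r l"
    have LC: "?L \<in> C" using link_in_C r lc by simp
    have Lc: "?L \<in> carrier G" using LC C_sub by auto
    have com: "gprod G x m n \<otimes> ?L = ?L \<otimes> gprod G x m n" using cent LC unfolding centralizer_of_def by auto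
    have "link G x n C (\<lambda>i. r i + m i) l = inv (gprod G x m n) \<otimes> ?L \<otimes> gprod G x m n"
      unfolding link_def e1 e2 using lc by (simp add: m_assoc inv_mult_group)
    also have "\<dots> = inv (gprod G x m n) \<otimes> (gprod G x m n \<otimes> ?L)" using com Lc by (simp add: m_assoc)
    also have "\<dots> = ?L" using Lc by simp
    finally show "link G x n C (\<lambda>i. r i + m i) l = ?L" .
  qed
  then show "m \<in> {m \<in> Zn n. \<forall>r \<in> Zn n. \<forall>l \<in> \<Lambda>. link G x n C (\<lambda>i. r i + m i) l = link G x n C r l}"
    using m by simp
qed

end


lemma pigeon_nat:
  assumes "finite A" "\<And>k::nat. f k \<in> A"
  shows "\<exists>k1 k2. k1 < k2 \<and> f k1 = f k2"
proof -
  have "\<not> inj f"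
  proof
    assume "inj f"
    moreover have "finite (range f)" using assms finite_subset[of "range f" A] by auto
    ultimately have "finite (UNIV::nat set)" using finite_imageD[of f UNIV] by simp
    then show False by simp
  qed
  then obtain a b where "a \<noteq> b" "f a = f b" unfolding inj_def by auto
  then show ?thesis by (metis linorder_neqE_nat)
qed

lemma (in group) conj_pow_eq:
  assumes a: "a \<in> carrier G" and b: "b \<in> carrier G" and k: "(k1::nat) < k2"
    and e: "a [^] k1 \<otimes> b \<otimes> inv (a [^] k1) = a [^] k2 \<otimes> b \<otimes> inv (a [^] k2)"
  shows "a [^] (k2 - k1) \<otimes> b = b \<otimes> a [^] (k2 - k1)"
proof -
  define d where "d = k2 - k1"
  define A where "A = a [^] k1"
  define D where "D = a [^] d"
  have AD: "A \<in> carrier G" "D \<in> carrier G" using a by (auto simp: A_def D_def)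
  have k2: "a [^] k2 = A \<otimes> D" using a k by (simp add: A_def D_def d_def nat_pow_mult)
  have "A \<otimes> (b \<otimes> inv A) = A \<otimes> ((D \<otimes> b \<otimes> inv D) \<otimes> inv A)"
    using e AD b unfolding k2 by (simp add: A_def[symmetric] inv_mult_group m_assoc)
  then have "b \<otimes> inv A = (D \<otimes> b \<otimes> inv D) \<otimes> inv A" using AD b by simp
  then have "b = D \<otimes> b \<otimes> inv D" using AD b by simp
  then have "b \<otimes> D = D \<otimes> b \<otimes> inv D \<otimes> D" by simp
  also have "\<dots> = D \<otimes> b" using AD b by (simp add: m_assoc)
  finally show ?thesis unfolding D_def d_def by simp
qed

context thm3_ctx
begin

lemma cent_mult:
  assumes a: "a \<in> centralizer_of G C" and b: "b \<in> centralizer_of G C"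
  shows "a \<otimes> b \<in> centralizer_of G C"
proof -
  have ac: "a \<in> carrier G" "\<forall>h\<in>C. a \<otimes> h = h \<otimes> a" using a unfolding centralizer_of_def by auto
  have bc: "b \<in> carrier G" "\<forall>h\<in>C. b \<otimes> h = h \<otimes> b" using b unfolding centralizer_of_def by auto
  have "a \<otimes> b \<otimes> h = h \<otimes> (a \<otimes> b)" if h: "h \<in> C" for h
  proof -
    have hc: "h \<in> carrier G" using h C_sub by auto
    have "a \<otimes> b \<otimes> h = a \<otimes> (h \<otimes> b)" using ac bc h hc by (simp add: m_assoc)
    also have "\<dots> = (h \<otimes> a) \<otimes> b" using ac bc h hc by (simp add: m_assoc[symmetric])
    finally show ?thesis using ac bc hc by (simp add: m_assoc)
  qed
  then show ?thesis using ac bc unfolding centralizer_of_def by auto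
qed

lemma cent_inv:
  assumes a: "a \<in> centralizer_of G C"
  shows "inv a \<in> centralizer_of G C"
proof -
  have ac: "a \<in> carrier G" "\<forall>h\<in>C. a \<otimes> h = h \<otimes> a" using a unfolding centralizer_of_def by auto
  have "inv a \<otimes> h = h \<otimes> inv a" if h: "h \<in> C" for h
  proof -
    have hc: "h \<in> carrier G" using h C_sub by auto
    have "a [^] (-1::int) \<otimes> h = h \<otimes> a [^] (-1::int)"
      using commute_int_pow[of a h] ac h hc by simp
    then show ?thesis using ac by (simp add: int_pow_neg)
  qed
  then show ?thesis using ac unfolding centralizer_of_def by auto
qed

lemma cent_one: "\<one> \<in> centralizer_of G C"
  unfolding centralizer_of_def using C_sub by auto

lemma cent_pow: "a \<in> centralizer_of G C \<Longrightarrow> a [^] (k::nat) \<in> centralizer_of G C"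
  by (induction k) (auto simp: cent_one cent_mult)

lemma good_zero: "good (\<lambda>i. 0)"
  unfolding good_def using Zn_zero cent_one by simp

lemma good_add:
  assumes "good m" "good m'"
  shows "good (\<lambda>i. m i + m' i) \<and> gprod G x (\<lambda>i. m i + m' i) n = gprod G x m n \<otimes> gprod G x m' n"
proof -
  have m: "m \<in> Zn n" "gprod G x m n \<in> centralizer_of G C"
     "\<forall>s\<in>Zn n. gprod G x (\<lambda>i. s i + m i) n = gprod G x s n \<otimes> gprod G x m n"
    using assms(1) good_def by auto
  have m': "m' \<in> Zn n" "gprod G x m' n \<in> centralizer_of G C"
     "\<forall>s\<in>Zn n. gprod G x (\<lambda>i. s i + m' i) n = gprod G x s n \<otimes> gprod G x m' n"
    using assms(2) good_def by auto
  have e: "gprod G x (\<lambda>i. m i + m' i) n = gprod G x m n \<otimes> gprod G x m' n"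
    using m'(3) m(1) by simp
  have sh: "\<forall>s\<in>Zn n. gprod G x (\<lambda>i. s i + (m i + m' i)) n = gprod G x s n \<otimes> gprod G x (\<lambda>i. m i + m' i) n"
  proof
    fix s assume s: "s \<in> Zn n"
    have fe: "(\<lambda>i. s i + (m i + m' i)) = (\<lambda>i. (s i + m i) + m' i)" by (simp add: algebra_simps)
    have "gprod G x (\<lambda>i. s i + (m i + m' i)) n = gprod G x (\<lambda>i. s i + m i) n \<otimes> gprod G x m' n"
      using fe m'(3) Zn_add[OF s m(1)] by simp
    also have "\<dots> = gprod G x s n \<otimes> gprod G x m n \<otimes> gprod G x m' n" using m(3) s by simp
    finally show "gprod G x (\<lambda>i. s i + (m i + m' i)) n = gprod G x s n \<otimes> gprod G x (\<lambda>i. m i + m' i) n"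
      using e by (simp add: m_assoc)
  qed
  show ?thesis using e sh Zn_add[OF m(1) m'(1)] cent_mult[OF m(2) m'(2)] good_def by simp
qed

lemma good_neg:
  assumes "good m"
  shows "good (\<lambda>i. - m i) \<and> gprod G x (\<lambda>i. - m i) n = inv (gprod G x m n)"
proof -
  have m: "m \<in> Zn n" "gprod G x m n \<in> centralizer_of G C"
     "\<forall>s\<in>Zn n. gprod G x (\<lambda>i. s i + m i) n = gprod G x s n \<otimes> gprod G x m n"
    using assms(1) good_def by auto
  have key: "\<And>s. s \<in> Zn n \<Longrightarrow> gprod G x (\<lambda>i. s i - m i) n = gprod G x s n \<otimes> inv (gprod G x m n)"
  proof -
    fix s assume s: "s \<in> Zn n"
    have sm: "(\<lambda>i. s i - m i) \<in> Zn n" using Zn_diff[OF s m(1)] .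
    have "gprod G x s n = gprod G x (\<lambda>i. (s i - m i) + m i) n" by simp
    also have "\<dots> = gprod G x (\<lambda>i. s i - m i) n \<otimes> gprod G x m n"
      by (rule m(3)[rule_format, OF sm])
    finally have "gprod G x s n \<otimes> inv (gprod G x m n) = gprod G x (\<lambda>i. s i - m i) n \<otimes> gprod G x m n \<otimes> inv (gprod G x m n)"
      by simp
    then show "gprod G x (\<lambda>i. s i - m i) n = gprod G x s n \<otimes> inv (gprod G x m n)"
      by (simp add: m_assoc)
  qed
  have e: "gprod G x (\<lambda>i. - m i) n = inv (gprod G x m n)"
    using key[OF Zn_zero] by simp
  have sh: "\<forall>s\<in>Zn n. gprod G x (\<lambda>i. s i + - m i) n = gprod G x s n \<otimes> gprod G x (\<lambda>i. - m i) n"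
    using key e by simp
  show ?thesis using e sh Zn_neg[OF m(1)] cent_inv[OF m(2)] good_def by simp
qed

lemma Pset_subgroup: "subgroup (Pset G x n C) G"
proof (rule subgroupI)
  show "Pset G x n C \<subseteq> carrier G" unfolding Pset_eq by auto
  show "Pset G x n C \<noteq> {}" unfolding Pset_eq using good_zero by blast
  fix a assume "a \<in> Pset G x n C"
  then obtain m where m: "good m" "a = gprod G x m n" unfolding Pset_eq by blast
  then show "inv a \<in> Pset G x n C" unfolding Pset_eq using good_neg[OF m(1)]
    by (metis (mono_tags, lifting) image_eqI mem_Collect_eq)
next
  fix a b assume "a \<in> Pset G x n C" "b \<in> Pset G x n C"
  then obtain m m' where m: "good m" "a = gprod G x m n" "good m'" "b = gprod G x m' n"
    unfolding Pset_eq by blast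
  then show "a \<otimes> b \<in> Pset G x n C" unfolding Pset_eq using good_add[OF m(1) m(3)]
    by (metis (mono_tags, lifting) image_eqI mem_Collect_eq)
qed

lemma comm_in_C:
  assumes p: "p \<in> carrier G" and q: "q \<in> carrier G"
  shows "p \<otimes> q \<otimes> inv p \<otimes> inv q \<in> C"
proof -
  obtain rp where rp: "rp \<in> Zn n" "C #> p = C #> gprod G x rp n" using surj_g p by blast
  obtain rq where rq: "rq \<in> Zn n" "C #> q = C #> gprod G x rq n" using surj_g q by blast
  have fe: "(\<lambda>i. rp i + rq i) = (\<lambda>i. rq i + rp i)" by (simp add: add.commute)
  have "C #> (p \<otimes> q) = C #> (gprod G x rp n \<otimes> gprod G x rq n)"
    using cos_mult[OF p _ q _ rp(2) rq(2)] by simp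
  also have "\<dots> = C #> gprod G x (\<lambda>i. rp i + rq i) n" using hom_g[OF rp(1) rq(1)] by simp
  also have "\<dots> = C #> (gprod G x rq n \<otimes> gprod G x rp n)" using hom_g[OF rq(1) rp(1)] fe by simp
  also have "\<dots> = C #> (q \<otimes> p)"
    using cos_mult[OF _ q _ p, of "gprod G x rq n" "gprod G x rp n"] rp(2) rq(2) by simp
  finally have "(p \<otimes> q) \<otimes> inv (q \<otimes> p) \<in> C" using coset_eq_iff p q by simp
  then show ?thesis using p q by (simp add: inv_mult_group m_assoc)
qed

lemma v_ex:
  assumes i: "i < n"
  shows "\<exists>v::nat. 0 < v \<and> x i [^] v \<in> centralizer_of G C"
proof -
  let ?y = "x i"
  have y: "?y \<in> carrier G" using x_carr i by simp
  let ?f = "\<lambda>k::nat. restrict (\<lambda>c. ?y [^] k \<otimes> c \<otimes> inv (?y [^] k)) C"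
  have "\<And>k. ?f k \<in> C \<rightarrow>\<^sub>E C"
    using normal.inv_op_closed2[OF C_nrm] y by auto
  moreover have "finite (C \<rightarrow>\<^sub>E C)" using C_fin by (simp add: finite_PiE)
  ultimately obtain k1 k2 where k: "k1 < k2" "?f k1 = ?f k2"
    using pigeon_nat[of "C \<rightarrow>\<^sub>E C" ?f] by blast
  have "\<forall>c\<in>C. ?y [^] (k2 - k1) \<otimes> c = c \<otimes> ?y [^] (k2 - k1)"
  proof
    fix c assume c: "c \<in> C"
    have "?f k1 c = ?f k2 c" using k by simp
    then have "?y [^] k1 \<otimes> c \<otimes> inv (?y [^] k1) = ?y [^] k2 \<otimes> c \<otimes> inv (?y [^] k2)"
      using c by simp
    then show "?y [^] (k2 - k1) \<otimes> c = c \<otimes> ?y [^] (k2 - k1)"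
      using conj_pow_eq[OF y _ k(1)] c C_sub by auto
  qed
  then show ?thesis using k y unfolding centralizer_of_def by (intro exI[of _ "k2 - k1"]) auto
qed

lemma V_ex:
  assumes i: "i < n" and j: "j < n"
  shows "\<exists>V::nat. 0 < V \<and> comm G (x i [^] V) (x j) = \<one>"
proof -
  have a: "x i \<in> carrier G" and b: "x j \<in> carrier G" using x_carr i j by auto
  let ?f = "\<lambda>k::nat. x i [^] k \<otimes> x j \<otimes> inv (x i [^] k) \<otimes> inv (x j)"
  have "\<And>k. ?f k \<in> C" using comm_in_C a b by simp
  then obtain k1 k2 where k: "k1 < k2" "?f k1 = ?f k2"
    using pigeon_nat[of C ?f] C_fin by blast
  then have "x i [^] k1 \<otimes> x j \<otimes> inv (x i [^] k1) = x i [^] k2 \<otimes> x j \<otimes> inv (x i [^] k2)"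
    using a b by simp
  then have "x i [^] (k2 - k1) \<otimes> x j = x j \<otimes> x i [^] (k2 - k1)"
    using conj_pow_eq[OF a b k(1)] by simp
  then show ?thesis using k a b comm_one_iff by (intro exI[of _ "k2 - k1"]) auto
qed

end


context thm3_ctx
begin

lemma Vexp_props:
  assumes "i < n" "j < n"
  shows "0 < Vexp G x i j \<and> comm G (x i [^] Vexp G x i j) (x j) = \<one>"
  unfolding Vexp_def by (rule LeastI_ex, rule V_ex[OF assms])

lemma vexp_props:
  assumes "i < n"
  shows "0 < vexp G x C i \<and> x i [^] vexp G x C i \<in> centralizer_of G C"
  unfolding vexp_def by (rule LeastI_ex, rule v_ex[OF assms])

lemma mexp_props:
  assumes i: "i < n"
  shows "0 < mexp G x n C i" "\<And>j. i < j \<Longrightarrow> j < n \<Longrightarrow> Vexp G x i j dvd mexp G x n C i"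
    "vexp G x C i dvd mexp G x n C i"
proof -
  let ?A = "{Vexp G x i j | j. i < j \<and> j < n} \<union> {vexp G x C i}"
  have "{Vexp G x i j | j. i < j \<and> j < n} \<subseteq> (\<lambda>j. Vexp G x i j) ` {..<n}" by auto
  then have fin: "finite ?A" using finite_subset by auto
  have "0 \<notin> ?A" using Vexp_props vexp_props i by fastforce
  then have "mexp G x n C i \<noteq> 0" unfolding mexp_def using Lcm_0_iff[OF fin] by blast
  then show "0 < mexp G x n C i" by simp
  show "\<And>j. i < j \<Longrightarrow> j < n \<Longrightarrow> Vexp G x i j dvd mexp G x n C i"
    unfolding mexp_def by (rule dvd_Lcm) blast
  show "vexp G x C i dvd mexp G x n C i"
    unfolding mexp_def by (rule dvd_Lcm) blast
qed

lemma pow_commute_dvd: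
  assumes a: "a \<in> carrier G" and b: "b \<in> carrier G" and c: "a [^] V \<otimes> b = b \<otimes> a [^] V"
    and d: "(V::nat) dvd M"
  shows "a [^] M \<otimes> b = b \<otimes> a [^] M"
proof -
  obtain k where k: "M = V * k" using d by blast
  have "a [^] M = (a [^] V) [^] k" using a k by (simp add: nat_pow_pow)
  then show ?thesis using group_commutes_pow[OF c] a b by simp
qed

lemma unit_good:
  assumes i: "i < n"
  shows "good (\<lambda>j. if j = i then int (mexp G x n C i) else 0)"
proof -
  let ?M = "mexp G x n C i"
  let ?u = "\<lambda>j. if j = i then int ?M else 0"
  have xi: "x i \<in> carrier G" using x_carr i by simp
  have Xcu: "Xc ?u" unfolding Xc_def
  proof (intro allI impI)
    fix k assume k: "k < n"
    have xk: "x k \<in> carrier G" using x_carr k by simp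
    show "comm G (gprod G x ?u k) (x k) = \<one>"
    proof (cases "k \<le> i")
      case True
      then show ?thesis using gprod_unit[of k i "int ?M"] k xk comm_one_iff[of \<one> "x k"] by simp
    next
      case False
      then have ik: "i < k" by simp
      have "x i [^] Vexp G x i k \<otimes> x k = x k \<otimes> x i [^] Vexp G x i k"
        using Vexp_props[OF i k] comm_one_iff xi xk by simp
      then have "x i [^] ?M \<otimes> x k = x k \<otimes> x i [^] ?M"
        using pow_commute_dvd[OF xi xk] mexp_props(2)[OF i ik k] by blast
      then show ?thesis using gprod_unit[of k i "int ?M"] k xk xi False comm_one_iff[of "x i [^] ?M" "x k"]
        by (simp add: int_pow_int)
    qed
  qed
  have "x i [^] ?M \<in> centralizer_of G C"
  proof -
    obtain k where k: "?M = vexp G x C i * k" using mexp_props(3)[OF i] by blast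
    have "x i [^] ?M = (x i [^] vexp G x C i) [^] k" using xi k by (simp add: nat_pow_pow)
    then show ?thesis using cent_pow vexp_props[OF i] by simp
  qed
  moreover have "gprod G x ?u n = x i [^] ?M" using gprod_unit[of n i "int ?M"] i by (simp add: int_pow_int)
  ultimately show ?thesis using good_iff Zn_unit[OF i] Xcu by simp
qed

lemma unit_g:
  assumes i: "i < n"
  shows "gprod G x (\<lambda>j. if j = i then int (mexp G x n C i) else 0) n = x i [^] mexp G x n C i"
  using gprod_unit[of n i "int (mexp G x n C i)"] i by (simp add: int_pow_int)

lemma claim3: "P_straight G x n C \<subseteq> Pset G x n C"
  unfolding P_straight_def
proof (rule generate_subgroup_incl[OF _ Pset_subgroup])
  show "{x i [^] mexp G x n C i |i. i < n} \<subseteq> Pset G x n C"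
  proof
    fix a assume "a \<in> {x i [^] mexp G x n C i |i. i < n}"
    then obtain i where i: "i < n" "a = x i [^] mexp G x n C i" by blast
    then show "a \<in> Pset G x n C" using unit_g[OF i(1)] unit_good[OF i(1)] Pset_iff Zn_unit[OF i(1)]
      by metis
  qed
qed

lemma claim4:
  assumes n: "1 \<le> n"
  shows "P_straight G x n C \<noteq> {\<one>}"
proof
  assume h: "P_straight G x n C = {\<one>}"
  have i: "0 < n" using n by simp
  have "x 0 [^] mexp G x n C 0 \<in> P_straight G x n C"
    unfolding P_straight_def by (rule generate.incl) (use i in blast)
  then have e: "gprod G x (\<lambda>j. if j = 0 then int (mexp G x n C 0) else 0) n = gprod G x (\<lambda>i. 0) n"
    using h unit_g[OF i] by simp
  have "(\<lambda>j::nat. if j = 0 then int (mexp G x n C 0) else 0) = (\<lambda>i. 0)"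
    using inj_g[of "\<lambda>j::nat. if j = 0 then int (mexp G x n C 0) else 0" "\<lambda>i. 0"] e i
    by (simp add: Zn_def)
  then have "int (mexp G x n C 0) = 0" by (metis (mono_tags) fun_cong)
  then show False using mexp_props(1)[OF i] by simp
qed

end


definition lcomb :: "nat \<Rightarrow> (nat \<Rightarrow> nat \<Rightarrow> int) \<Rightarrow> (nat \<Rightarrow> int) \<Rightarrow> (nat \<Rightarrow> int)" where
  "lcomb m b c = (\<lambda>j. \<Sum>k<m. c k * b k j)"

lemma smul_closed:
  fixes H :: "(nat \<Rightarrow> int) set"
  assumes z: "(\<lambda>i. 0) \<in> H" and add: "\<And>a b. a\<in>H \<Longrightarrow> b\<in>H \<Longrightarrow> (\<lambda>i. a i + b i) \<in> H"
    and neg: "\<And>a. a \<in> H \<Longrightarrow> (\<lambda>i. - a i) \<in> H" and a: "a \<in> H"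
  shows "(\<lambda>i. t * a i) \<in> H"
proof -
  have nat: "(\<lambda>i. int k * a i) \<in> H" for k
  proof (induction k)
    case 0
    then show ?case using z by simp
  next
    case (Suc k)
    have "(\<lambda>i. int (Suc k) * a i) = (\<lambda>i. int k * a i + a i)" by (simp add: algebra_simps)
    then show ?case using add[OF Suc a] by simp
  qed
  show ?thesis
  proof (cases "t \<ge> 0")
    case True
    then show ?thesis using nat[of "nat t"] by simp
  next
    case False
    have "(\<lambda>i. t * a i) = (\<lambda>i. - (int (nat (-t)) * a i))" using False by simp
    then show ?thesis using neg[OF nat[of "nat (-t)"]] by simp
  qed
qed

lemma lattice:
  fixes H :: "(nat \<Rightarrow> int) set"
  assumes "H \<subseteq> Zn n" "(\<lambda>i. 0) \<in> H" "\<And>a b. a\<in>H \<Longrightarrow> b\<in>H \<Longrightarrow> (\<lambda>i. a i + b i) \<in> H"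
    "\<And>a. a \<in> H \<Longrightarrow> (\<lambda>i. - a i) \<in> H"
    "\<And>i. i < n \<Longrightarrow> \<exists>d>0. (\<lambda>j. if j = i then d else 0) \<in> H"
  shows "\<exists>b. bij_betw (lcomb n b) (Zn n) H"
  using assms
proof (induction n arbitrary: H)
  case 0
  have Z0: "Zn 0 = {\<lambda>i. 0}" by (auto simp: Zn_def)
  then have "H = {\<lambda>i. 0}" using "0.prems"(1,2) by auto
  then show ?case using Z0 by (auto simp: lcomb_def bij_betw_def)
next
  case (Suc n)
  note sub = Suc.prems(1) and z = Suc.prems(2) and add = Suc.prems(3) and neg = Suc.prems(4)
    and units = Suc.prems(5)
  have smul: "\<And>a t. a \<in> H \<Longrightarrow> (\<lambda>i. t * a i) \<in> H" using smul_closed[OF z add neg] by blast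
  define H' where "H' = {h \<in> H. h n = 0}"
  have "\<exists>b. bij_betw (lcomb n b) (Zn n) H'"
  proof (rule Suc.IH)
    show "H' \<subseteq> Zn n"
    proof
      fix h assume "h \<in> H'"
      then have hZ: "h \<in> Zn (Suc n)" and hn: "h n = 0" using sub H'_def by auto
      show "h \<in> Zn n" unfolding Zn_def
      proof (intro CollectI allI impI)
        fix i assume "n \<le> i"
        then show "h i = 0" using hZ hn by (cases "i = n") (auto simp: Zn_def)
      qed
    qed
    show "(\<lambda>i. 0) \<in> H'" using z H'_def by simp
    show "\<And>a b. a\<in>H' \<Longrightarrow> b\<in>H' \<Longrightarrow> (\<lambda>i. a i + b i) \<in> H'" using add H'_def by simp
    show "\<And>a. a \<in> H' \<Longrightarrow> (\<lambda>i. - a i) \<in> H'" using neg H'_def by simp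
    show "\<And>i. i < n \<Longrightarrow> \<exists>d>0. (\<lambda>j. if j = i then d else 0) \<in> H'"
      using units H'_def by fastforce
  qed
  then obtain b' where b': "bij_betw (lcomb n b') (Zn n) H'" by blast
  have b'H: "lcomb n b' c \<in> H" "lcomb n b' c n = 0" if "c \<in> Zn n" for c
    using b' that H'_def bij_betwE by blast+
  define S where "S = {k::nat. 0 < k \<and> (\<exists>h\<in>H. h n = int k)}"
  obtain dn where dn: "dn > 0" "(\<lambda>j. if j = n then dn else 0) \<in> H" using units by blast
  have "nat dn \<in> S" unfolding S_def using dn by (intro CollectI conjI bexI[OF _ dn(2)]) auto
  define \<delta> where "\<delta> = (LEAST k. k \<in> S)"
  have dS: "\<delta> \<in> S" unfolding \<delta>_def using \<open>nat dn \<in> S\<close> by (rule LeastI)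
  have dmin: "\<And>k. k \<in> S \<Longrightarrow> \<delta> \<le> k" unfolding \<delta>_def by (rule Least_le)
  obtain hd where hd: "hd \<in> H" "hd n = int \<delta>" "\<delta> > 0" using dS S_def by auto
  have dv: "h n mod int \<delta> = 0" if h: "h \<in> H" for h
  proof (rule ccontr)
    assume nz: "h n mod int \<delta> \<noteq> 0"
    define t where "t = h n div int \<delta>"
    have "(\<lambda>i. h i + (- t) * hd i) \<in> H" by (rule add[OF h smul[OF hd(1)]])
    moreover have "h n + (- t) * hd n = h n mod int \<delta>"
      using hd(2) by (simp add: t_def minus_div_mult_eq_mod[symmetric] algebra_simps)
    moreover have "0 \<le> h n mod int \<delta>" "h n mod int \<delta> < int \<delta>" using hd(3) by auto
    ultimately have "nat (h n mod int \<delta>) \<in> S" "nat (h n mod int \<delta>) < \<delta>" using nz unfolding S_def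
      by (auto intro!: bexI[of _ "\<lambda>i. h i + (- t) * hd i"])
    then show False using dmin by fastforce
  qed
  define b where "b = b'(n := hd)"
  have Phi: "lcomb (Suc n) b c = (\<lambda>j. lcomb n b' c j + c n * hd j)" for c
    unfolding lcomb_def b_def by (auto simp: fun_eq_iff)
  have Phi0: "lcomb n b' (c(n := 0)) = lcomb n b' c" for c
    unfolding lcomb_def by (auto simp: fun_eq_iff intro!: sum.cong)
  have restr: "c(n := 0) \<in> Zn n" if "c \<in> Zn (Suc n)" for c
    unfolding Zn_def
  proof (intro CollectI allI impI)
    fix i assume "n \<le> i"
    then show "(c(n := 0)) i = 0" using that by (cases "i = n") (auto simp: Zn_def)
  qed
  show ?case
  proof (intro exI[of _ b] bij_betw_imageI)
    show "inj_on (lcomb (Suc n) b) (Zn (Suc n))"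
    proof (rule inj_onI)
      fix c1 c2 assume c1: "c1 \<in> Zn (Suc n)" and c2: "c2 \<in> Zn (Suc n)"
        and e: "lcomb (Suc n) b c1 = lcomb (Suc n) b c2"
      have e1: "lcomb n b' (c1(n:=0)) n + c1 n * hd n = lcomb n b' (c2(n:=0)) n + c2 n * hd n"
        using e unfolding Phi Phi0 by (metis Phi0)
      then have "c1 n * int \<delta> = c2 n * int \<delta>" using b'H(2)[OF restr[OF c1]] b'H(2)[OF restr[OF c2]] hd(2) by simp
      then have cn: "c1 n = c2 n" using hd(3) by simp
      have "lcomb n b' (c1(n:=0)) = lcomb n b' (c2(n:=0))"
      proof
        fix j
        have "lcomb n b' c1 j + c1 n * hd j = lcomb n b' c2 j + c2 n * hd j"
          using e unfolding Phi by meson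
        then show "lcomb n b' (c1(n:=0)) j = lcomb n b' (c2(n:=0)) j" using cn Phi0 by simp
      qed
      then have "c1(n:=0) = c2(n:=0)"
        using b' restr[OF c1] restr[OF c2] unfolding bij_betw_def inj_on_def by blast
      then show "c1 = c2" using cn by (metis fun_upd_idem_iff fun_upd_upd)
    qed
    show "lcomb (Suc n) b ` Zn (Suc n) = H"
    proof (intro equalityI subsetI)
      fix h assume "h \<in> lcomb (Suc n) b ` Zn (Suc n)"
      then obtain c where c: "c \<in> Zn (Suc n)" "h = lcomb (Suc n) b c" by blast
      have "h = (\<lambda>j. lcomb n b' (c(n:=0)) j + c n * hd j)" using c Phi Phi0 by simp
      moreover have "(\<lambda>j. lcomb n b' (c(n:=0)) j + c n * hd j) \<in> H"
        by (rule add[OF b'H(1)[OF restr[OF c(1)]] smul[OF hd(1)]])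
      ultimately show "h \<in> H" by simp
    next
      fix h assume h: "h \<in> H"
      define t where "t = h n div int \<delta>"
      have ht: "h n = t * int \<delta>" using dv[OF h] unfolding t_def
        by (metis add.right_neutral mult.commute div_mult_mod_eq)
      define h' where "h' = (\<lambda>i. h i + (- t) * hd i)"
      have "h' \<in> H" unfolding h'_def by (rule add[OF h smul[OF hd(1)]])
      moreover have "h' n = 0" unfolding h'_def using ht hd(2) by simp
      ultimately have "h' \<in> H'" unfolding H'_def by simp
      then obtain c' where c': "c' \<in> Zn n" "lcomb n b' c' = h'"
        using b' unfolding bij_betw_def by blast
      define c where "c = c'(n := t)"
      have cZ: "c \<in> Zn (Suc n)" using c'(1) unfolding c_def Zn_def by auto
      have "c'(n := 0) = c'" using c'(1) unfolding Zn_def by auto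
      then have "c(n := 0) = c'" unfolding c_def by simp
      then have "lcomb (Suc n) b c = (\<lambda>j. h' j + t * hd j)"
        using Phi[of c] Phi0[of c] c'(2) unfolding c_def by simp
      also have "\<dots> = h" unfolding h'_def by (simp add: algebra_simps)
      finally show "h \<in> lcomb (Suc n) b ` Zn (Suc n)" using cZ by (metis imageI)
    qed
  qed
qed



lemma Zn_group_grp: "group (Zn_group n)"
proof (rule groupI)
  show "\<And>a b. a \<in> carrier (Zn_group n) \<Longrightarrow> b \<in> carrier (Zn_group n) \<Longrightarrow> a \<otimes>\<^bsub>Zn_group n\<^esub> b \<in> carrier (Zn_group n)"
    by (simp add: Zn_group_def Zn_def)
  show "\<one>\<^bsub>Zn_group n\<^esub> \<in> carrier (Zn_group n)" by (simp add: Zn_group_def Zn_def)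
  show "\<And>a b c. a \<in> carrier (Zn_group n) \<Longrightarrow> b \<in> carrier (Zn_group n) \<Longrightarrow> c \<in> carrier (Zn_group n) \<Longrightarrow>
      a \<otimes>\<^bsub>Zn_group n\<^esub> b \<otimes>\<^bsub>Zn_group n\<^esub> c = a \<otimes>\<^bsub>Zn_group n\<^esub> (b \<otimes>\<^bsub>Zn_group n\<^esub> c)"
    by (simp add: Zn_group_def algebra_simps)
  show "\<And>a. a \<in> carrier (Zn_group n) \<Longrightarrow> \<one>\<^bsub>Zn_group n\<^esub> \<otimes>\<^bsub>Zn_group n\<^esub> a = a"
    by (simp add: Zn_group_def)
  show "\<And>a. a \<in> carrier (Zn_group n) \<Longrightarrow> \<exists>b\<in>carrier (Zn_group n). b \<otimes>\<^bsub>Zn_group n\<^esub> a = \<one>\<^bsub>Zn_group n\<^esub>"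
  proof -
    fix a assume "a \<in> carrier (Zn_group n)"
    then have "(\<lambda>i. - a i) \<in> carrier (Zn_group n)" by (simp add: Zn_group_def Zn_def)
    moreover have "(\<lambda>i. - a i) \<otimes>\<^bsub>Zn_group n\<^esub> a = \<one>\<^bsub>Zn_group n\<^esub>" by (simp add: Zn_group_def)
    ultimately show "\<exists>b\<in>carrier (Zn_group n). b \<otimes>\<^bsub>Zn_group n\<^esub> a = \<one>\<^bsub>Zn_group n\<^esub>" by blast
  qed
qed

context thm3_ctx
begin

lemma claim_iso: "G\<lparr>carrier := Pset G x n C\<rparr> \<cong> Zn_group n"
proof -
  let ?H = "{m. good m}"
  have "\<exists>b. bij_betw (lcomb n b) (Zn n) ?H"
  proof (rule lattice)
    show "?H \<subseteq> Zn n" using good_def by auto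
    show "(\<lambda>i. 0) \<in> ?H" using good_zero by simp
    show "\<And>a b. a \<in> ?H \<Longrightarrow> b \<in> ?H \<Longrightarrow> (\<lambda>i. a i + b i) \<in> ?H" using good_add by simp
    show "\<And>a. a \<in> ?H \<Longrightarrow> (\<lambda>i. - a i) \<in> ?H" using good_neg by simp
    show "\<And>i. i < n \<Longrightarrow> \<exists>d>0. (\<lambda>j. if j = i then d else 0) \<in> ?H"
    proof -
      fix i assume i: "i < n"
      show "\<exists>d>0. (\<lambda>j. if j = i then d else 0) \<in> ?H"
        using unit_good[OF i] mexp_props(1)[OF i] by (intro exI[of _ "int (mexp G x n C i)"]) simp
    qed
  qed
  then obtain b where b: "bij_betw (lcomb n b) (Zn n) ?H" by blast
  have gb: "bij_betw (\<lambda>m. gprod G x m n) ?H (Pset G x n C)"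
  proof (rule bij_betw_imageI)
    show "inj_on (\<lambda>m. gprod G x m n) ?H"
      by (rule inj_onI) (use inj_g good_def in auto)
    show "(\<lambda>m. gprod G x m n) ` ?H = Pset G x n C" using Pset_eq by simp
  qed
  let ?psi = "\<lambda>c. gprod G x (lcomb n b c) n"
  have bij: "bij_betw ?psi (Zn n) (Pset G x n C)"
    using bij_betw_trans[OF b gb] by (simp add: o_def)
  have lin: "lcomb n b (\<lambda>i. c i + c' i) = (\<lambda>j. lcomb n b c j + lcomb n b c' j)" for c c'
    unfolding lcomb_def by (simp add: fun_eq_iff distrib_right sum.distrib)
  have "?psi \<in> hom (Zn_group n) (G\<lparr>carrier := Pset G x n C\<rparr>)"
  proof (rule homI)
    show "\<And>c. c \<in> carrier (Zn_group n) \<Longrightarrow> ?psi c \<in> carrier (G\<lparr>carrier := Pset G x n C\<rparr>)"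
      using bij bij_betwE by (fastforce simp: Zn_group_def)
    show "\<And>c c'. c \<in> carrier (Zn_group n) \<Longrightarrow> c' \<in> carrier (Zn_group n) \<Longrightarrow>
      ?psi (c \<otimes>\<^bsub>Zn_group n\<^esub> c') = ?psi c \<otimes>\<^bsub>G\<lparr>carrier := Pset G x n C\<rparr>\<^esub> ?psi c'"
    proof -
      fix c c' assume c: "c \<in> carrier (Zn_group n)" and c': "c' \<in> carrier (Zn_group n)"
      have "good (lcomb n b c)" "good (lcomb n b c')"
        using b c c' bij_betwE by (fastforce simp: Zn_group_def)+
      then show "?psi (c \<otimes>\<^bsub>Zn_group n\<^esub> c') = ?psi c \<otimes>\<^bsub>G\<lparr>carrier := Pset G x n C\<rparr>\<^esub> ?psi c'"
        using good_add by (simp add: Zn_group_def lin)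
    qed
  qed
  then have "?psi \<in> iso (Zn_group n) (G\<lparr>carrier := Pset G x n C\<rparr>)"
    using bij unfolding iso_def by (simp add: Zn_group_def)
  then have "Zn_group n \<cong> G\<lparr>carrier := Pset G x n C\<rparr>" by (rule is_isoI)
  then show ?thesis using group.iso_sym[OF Zn_group_grp] by blast
qed

end

theorem theorem3:
  fixes G :: "('a, 'b) monoid_scheme" and x :: "nat \<Rightarrow> 'a" and n :: nat and C :: "'a set"
  assumes grp: "group G"
    and n_pos: "1 \<le> n"
    and x_carr: "\<And>i. i < n \<Longrightarrow> x i \<in> carrier G"
    and gen: "generate G (x ` {..<n}) = carrier G"
    and C_def: "C = derived G (carrier G)"
    and C_fin: "finite C"
    and basis: "(\<lambda>r. C #>\<^bsub>G\<^esub> gprod G x r n) \<in> iso (Zn_group n) (G Mod C)"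
  shows
    "(\<forall>\<Lambda>. \<Lambda> \<subseteq> carrier G \<and> generate G \<Lambda> = carrier G \<longrightarrow>
        {m \<in> Zn n. \<forall>r \<in> Zn n. \<forall>l \<in> \<Lambda>.
            link G x n C (\<lambda>i. r i + m i) l = link G x n C r l}
        = {m \<in> Zn n. gprod G x m n \<in> Pset G x n C})
     \<and> subgroup (Pset G x n C) G
     \<and> G\<lparr>carrier := Pset G x n C\<rparr> \<cong> Zn_group n
     \<and> P_straight G x n C \<subseteq> Pset G x n C
     \<and> P_straight G x n C \<noteq> {\<one>\<^bsub>G\<^esub>}"
proof -
  have nrm: "C \<lhd> G"
    using C_def group.derived_is_normal[OF grp group.normal_self[OF grp]] by simp
  interpret T: thm3_ctx G x n C
    using grp x_carr nrm C_fin basis by (simp add: thm3_ctx_def thm3_ctx_axioms_def)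
  show ?thesis
    using T.claim1 T.Pset_subgroup T.claim_iso T.claim3 T.claim4[OF n_pos] by blast
qed


end
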